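(* Let $T\in V$ be a target variable. If $\zeta_T=n$ (i.e. $T\in\Upsilon_i$ for all $i$) and the family $\{\Upsilon_1\setminus\{T\},\dots,\Upsilon_n\setminus\{T\}\}$ is conservative, then $\bigcup_{i=1}^{n}MB_i(T)=ch(T)\cup sp(T)$.
   Context: Let $G=(V,E)$ be a DAG (causal Bayesian network) over a finite set $V$ of random variables with joint distribution $P$ satisfying the Markov condition with respect to $G$; causal sufficiency is assumed. For $X\in V$, $pa(X)$ and $ch(X)$ are the parents and children of $X$ in $G$, $sp(X)=\big(\bigcup_{Y\in ch(X)}pa(Y)\big)\setminus\{X\}$ is the set of spouses, and $MB(X)=pa(X)\cup ch(X)\cup sp(X)$ is the Markov blanket. There are $n\ge 1$ intervention experiments; in the $i$-th, the set $\Upsilon_i\subseteq V$ is manipulated. The post-intervention DAG is $G_i=(V,E_i)$ with $E_i=\{(a,b)\in E: b\notin\Upsilon_i\}$, with distribution $P_i(V)=\prod_{V_j\notin\Upsilon_i}P(V_j\mid pa(V_j))\prod_{V_j\in\Upsilon_i}P_i(V_j)$, and $D_i$ is a dataset drawn from $P_i$. It is assumed that each $P_i$ is faithful to $G_i$ and that conditional independence tests on $D_i$ are reliable (return exactly the conditional independences of $P_i$). $MB_i(T)$ denotes the Markov blanket of $T$ found in $D_i$, i.e. the set of parents, children and spouses of $T$ in $G_i$. $\zeta_T=|\{i:T\in\Upsilon_i\}|$. A family $\{A_1,\dots,A_n\}$ of subsets of $V$ is called conservative if for every $V_j\in\bigcup_{i=1}^n A_i$ there exists $i$ with $V_j\notin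 A_i$. *)

theory Defs
  imports Main
begin

definition is_dag :: "'v set \<Rightarrow> ('v \<times> 'v) set \<Rightarrow> bool" where
  "is_dag V E \<longleftrightarrow> finite V \<and> E \<subseteq> V \<times> V \<and> acyclic E"

definition pa :: "('v \<times> 'v) set \<Rightarrow> 'v \<Rightarrow> 'v set" where
  "pa E X = {a. (a, X) \<in> E}"

definition ch :: "('v \<times> 'v) set \<Rightarrow> 'v \<Rightarrow> 'v set" where
  "ch E X = {b. (X, b) \<in> E}"

definition sp :: "('v \<times> 'v) set \<Rightarrow> 'v \<Rightarrow> 'v set" where
  "sp E X = (\<Union>Y\<in>ch E X. pa E Y) - {X}"

definition MB :: "('v \<times> 'v) set \<Rightarrow> 'v \<Rightarrow> 'v set" where
  "MB E X = pa E X \<union> ch E X \<union> sp E X"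

definition intervene :: "('v \<times> 'v) set \<Rightarrow> 'v set \<Rightarrow> ('v \<times> 'v) set" where
  "intervene E U = {(a, b) \<in> E. b \<notin> U}"

definition MB_i :: "('v \<times> 'v) set \<Rightarrow> (nat \<Rightarrow> 'v set) \<Rightarrow> nat \<Rightarrow> 'v \<Rightarrow> 'v set" where
  "MB_i E Ups i T = MB (intervene E (Ups i)) T"

definition zeta :: "nat \<Rightarrow> (nat \<Rightarrow> 'v set) \<Rightarrow> 'v \<Rightarrow> nat" where
  "zeta n Ups T = card {i \<in> {1..n}. T \<in> Ups i}"

definition conservative :: "nat \<Rightarrow> (nat \<Rightarrow> 'v set) \<Rightarrow> bool" where
  "conservative n A \<longleftrightarrow> (\<forall>v \<in> (\<Union>i\<in>{1..n}. A i). \<exists>i\<in>{1..n}. v \<notin> A i)"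

end

theory Submission
  imports Defs
begin

theorem theorem8:
  fixes V :: "'v set" and E :: "('v \<times> 'v) set" and n :: nat
    and Ups :: "nat \<Rightarrow> 'v set" and T :: 'v
  assumes "is_dag V E"
    and "n \<ge> 1"
    and "\<forall>i\<in>{1..n}. Ups i \<subseteq> V"
    and "T \<in> V"
    and "zeta n Ups T = n"
    and "conservative n (\<lambda>i. Ups i - {T})"
  shows "(\<Union>i\<in>{1..n}. MB_i E Ups i T) = ch E T \<union> sp E T"
proof -
  have noloop: "\<And>x. (x, x) \<notin> E"
    using assms(1) unfolding is_dag_def acyclic_def by (meson r_into_trancl')
  have sub: "{i \<in> {1..n}. T \<in> Ups i} \<subseteq> {1..n}" by auto
  have "card {i \<in> {1..n}. T \<in> Ups i} = card {1..n::nat}"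
    using assms(5) unfolding zeta_def by simp
  hence eq: "{i \<in> {1..n}. T \<in> Ups i} = {1..n}"
    using card_subset_eq[OF _ sub] by simp
  hence TU: "\<And>i. i \<in> {1..n} \<Longrightarrow> T \<in> Ups i" by blast
  have keep: "\<exists>i\<in>{1..n}. Y \<notin> Ups i" if "(T, Y) \<in> E" for Y
  proof (cases "\<exists>i\<in>{1..n}. Y \<in> Ups i - {T}")
    case True
    then show ?thesis using assms(6) unfolding conservative_def by blast
  next
    case False
    have "Y \<noteq> T" using that noloop by blast
    moreover have "1 \<in> {1..n}" using assms(2) by simp
    ultimately show ?thesis using False by blast
  qed
  show ?thesis
  proof
    show "(\<Union>i\<in>{1..n}. MB_i E Ups i T) \<subseteq> ch E T \<union> sp E T"
      using TU unfolding MB_i_def MB_def pa_def ch_def sp_def intervene_def by blast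
  next
    show "ch E T \<union> sp E T \<subseteq> (\<Union>i\<in>{1..n}. MB_i E Ups i T)"
    proof
      fix x assume "x \<in> ch E T \<union> sp E T"
      then consider "(T, x) \<in> E" | Y where "(T, Y) \<in> E" "(x, Y) \<in> E" "x \<noteq> T"
        unfolding ch_def sp_def pa_def by blast
      then show "x \<in> (\<Union>i\<in>{1..n}. MB_i E Ups i T)"
      proof cases
        case 1
        then obtain i where "i \<in> {1..n}" "x \<notin> Ups i" using keep by blast
        then show ?thesis using 1
          unfolding MB_i_def MB_def ch_def intervene_def by blast
      next
        case 2
        then obtain i where "i \<in> {1..n}" "Y \<notin> Ups i" using keep by blast
        then show ?thesis using 2
          unfolding MB_i_def MB_def ch_def sp_def pa_def intervene_def by blast
      qed
    qed
  qed
qed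

end
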